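(* Let $\mu$ be a non-atomic Radon measure on $\mathbb{R}^n$, let $1<p<\infty$ and let $w\in A^*_p(\mu)$. Then for every rectangle $R\subset\mathbb{R}^n$ with sides parallel to the coordinate axes and every $\lambda> w_R$, where $w_R=\frac{1}{\mu(R)}\int_R w\,d\mu$, \[ w(\{x\in R: w(x)>\lambda\})\le 2\lambda\,\mu\Big(\Big\{x\in R: w(x)>\frac{1}{2^{p-1}[w]_{A^*_p(\mu)}}\,w_R\Big\}\Big). \]
   Context: A weight is a nonnegative $\mu$-measurable function; for a set $E$, $w(E)=\int_E w\,d\mu$. "Rectangle" means a rectangle with sides parallel to the coordinate axes; averages are over rectangles with $0<\mu(R)<\infty$. For $1<p<\infty$, $p'=p/(p-1)$, $A^*_p(\mu)$ is the class of weights with \[ [w]_{A^*_p(\mu)}:=\sup_R \left(\frac{1}{\mu(R)}\int_R w\,d\mu\right)\left(\frac{1}{\mu(R)}\int_R w^{1-p'}\,d\mu\right)^{p-1}<\infty, \] the supremum over all rectangles $R$. *)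

theory Defs
  imports "HOL-Analysis.Analysis"
begin

definition rectangle :: "'a::euclidean_space set \<Rightarrow> bool" where
  "rectangle R \<longleftrightarrow> bounded R \<and>
     (\<exists>I :: 'a \<Rightarrow> real set. (\<forall>i\<in>Basis. is_interval (I i)) \<and>
        R = {x. \<forall>i\<in>Basis. x \<bullet> i \<in> I i})"

text \<open>Admissible rectangles: those over which averages are taken.\<close>
definition adm_rect :: "'a::euclidean_space measure \<Rightarrow> 'a set \<Rightarrow> bool" where
  "adm_rect M R \<longleftrightarrow> rectangle R \<and> 0 < emeasure M R \<and> emeasure M R < \<infinity>"

definition nonatomic_radon :: "'a::euclidean_space measure \<Rightarrow> bool" where
  "nonatomic_radon M \<longleftrightarrow> sets M = sets borel \<and>
     (\<forall>K. compact K \<longrightarrow> emeasure M K < \<infinity>) \<and>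
     (\<forall>x. emeasure M {x} = 0)"

definition weight :: "'a measure \<Rightarrow> ('a \<Rightarrow> real) \<Rightarrow> bool" where
  "weight M w \<longleftrightarrow> w \<in> borel_measurable M \<and> (\<forall>x. 0 \<le> w x)"

definition conj_exp :: "real \<Rightarrow> real" where
  "conj_exp p = p / (p - 1)"

text \<open>The function w^(1-p'), with the convention 0^(negative) = infinity.\<close>
definition dual_weight :: "real \<Rightarrow> ('a \<Rightarrow> real) \<Rightarrow> 'a \<Rightarrow> ennreal" where
  "dual_weight p w x = (if w x = 0 then \<infinity> else ennreal (w x powr (1 - conj_exp p)))"

definition Ap_quantity :: "'a measure \<Rightarrow> real \<Rightarrow> ('a \<Rightarrow> real) \<Rightarrow> 'a set \<Rightarrow> ennreal" where
  "Ap_quantity M p w R =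
     (let S = (\<integral>\<^sup>+x\<in>R. dual_weight p w x \<partial>M)
      in if S = \<infinity> then \<infinity>
         else ((\<integral>\<^sup>+x\<in>R. ennreal (w x) \<partial>M) / emeasure M R) *
              ennreal ((enn2real S / measure M R) powr (p - 1)))"

definition Ap_char :: "'a::euclidean_space measure \<Rightarrow> real \<Rightarrow> ('a \<Rightarrow> real) \<Rightarrow> ennreal" where
  "Ap_char M p w = (SUP R \<in> {R. adm_rect M R}. Ap_quantity M p w R)"

definition Ap_star :: "'a::euclidean_space measure \<Rightarrow> real \<Rightarrow> ('a \<Rightarrow> real) set" where
  "Ap_star M p = {w. weight M w \<and> Ap_char M p w < \<infinity>}"

definition avg :: "'a measure \<Rightarrow> ('a \<Rightarrow> real) \<Rightarrow> 'a set \<Rightarrow> real" where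
  "avg M w R = enn2real (\<integral>\<^sup>+x\<in>R. ennreal (w x) \<partial>M) / measure M R"

end

theory Submission imports Defs begin
lemma rect_borel: assumes "rectangle (R::'a::euclidean_space set)" shows "R \<in> sets borel"
proof -
  from assms obtain I :: "'a \<Rightarrow> real set" where I: "\<forall>i\<in>Basis. is_interval (I i)"
     and R: "R = {x. \<forall>i\<in>Basis. x \<bullet> i \<in> I i}" unfolding rectangle_def by blast
  have "R = (\<Inter>i\<in>Basis. (\<lambda>x. x \<bullet> i) -` I i)" using R by auto
  moreover have "\<And>i. i \<in> Basis \<Longrightarrow> (\<lambda>x::'a. x \<bullet> i) -` I i \<in> sets borel"
  proof -
    fix i :: 'a assume "i \<in> Basis"
    then have [measurable]: "I i \<in> sets borel" using I real_interval_borel_measurable by blast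
    have "(\<lambda>x::'a. x \<bullet> i) \<in> borel_measurable borel" by measurable
    from measurable_sets_borel[OF this \<open>I i \<in> sets borel\<close>]
    show "(\<lambda>x::'a. x \<bullet> i) -` I i \<in> sets borel" by simp
  qed
  ultimately show ?thesis by (auto intro!: sets.finite_INT)
qed
lemma dual_meas: assumes [measurable]: "w \<in> borel_measurable M" shows "dual_weight p w \<in> borel_measurable M"
  unfolding dual_weight_def by measurable
theorem lemma2p1:
  fixes M :: "'a::euclidean_space measure" and p :: real and w :: "'a \<Rightarrow> real"
    and R :: "'a set" and lam :: real
  assumes "nonatomic_radon M"
    and "1 < p"
    and "w \<in> Ap_star M p"
    and "adm_rect M R"
    and "lam > avg M w R"
  shows "(\<integral>\<^sup>+x\<in>{x\<in>R. w x > lam}. ennreal (w x) \<partial>M)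
           \<le> ennreal (2 * lam) *
             emeasure M {x\<in>R. w x > avg M w R / (2 powr (p - 1) * enn2real (Ap_char M p w))}"
proof -
  have sM: "sets M = sets borel" using assms(1) unfolding nonatomic_radon_def by auto
  have wm[measurable]: "w \<in> borel_measurable M" and w0: "\<And>x. 0 \<le> w x"
    using assms(3) unfolding Ap_star_def weight_def by auto
  have Afin: "Ap_char M p w < \<infinity>" using assms(3) unfolding Ap_star_def by auto
  have Rr: "rectangle R" and Rpos: "0 < emeasure M R" and Rfin: "emeasure M R < \<infinity>"
    using assms(4) unfolding adm_rect_def by auto
  have Rm[measurable]: "R \<in> sets M" using rect_borel[OF Rr] sM by simp
  define m where "m = measure M R"
  have emR: "emeasure M R = ennreal m" unfolding m_def using Rfin by (intro emeasure_eq_ennreal_measure) simp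
  have m0: "m > 0" using Rpos emR by simp
  define W where "W = (\<integral>\<^sup>+x\<in>R. ennreal (w x) \<partial>M)"
  define S where "S = (\<integral>\<^sup>+x\<in>R. dual_weight p w x \<partial>M)"
  define A where "A = Ap_char M p w"
  define K where "K = enn2real A"
  define a where "a = avg M w R"
  define s where "s = enn2real S / m"
  define c where "c = a / (2 powr (p - 1) * K)"
  have QA: "Ap_quantity M p w R \<le> A" unfolding A_def Ap_char_def
    using assms(4) by (auto intro: SUP_upper)
  have Sfin: "S \<noteq> \<infinity>"
  proof
    assume "S = \<infinity>"
    then have "Ap_quantity M p w R = \<infinity>" unfolding Ap_quantity_def S_def by simp
    then show False using QA Afin A_def by (simp add: top_unique)
  qed
  have dm[measurable]: "dual_weight p w \<in> borel_measurable M" by (rule dual_meas[OF wm])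
  have Spos: "S \<noteq> 0"
  proof
    assume "S = 0"
    then have "AE x in M. dual_weight p w x * indicator R x = 0"
      unfolding S_def by (subst nn_integral_0_iff_AE[symmetric]) auto
    moreover have "dual_weight p w x \<noteq> 0" for x
    proof (cases "w x = 0")
      case False
      then have "w x > 0" using w0[of x] by simp
      then show ?thesis using False by (simp add: dual_weight_def)
    qed (simp add: dual_weight_def)
    ultimately have "AE x in M. x \<notin> R" by (auto simp: indicator_def)
    then have "emeasure M R = 0" using Rm using AE_iff_measurable[OF Rm, of "\<lambda>x. x \<notin> R"] sets.sets_into_space[OF Rm] by auto
    then show False using Rpos by simp
  qed
  have Sp: "0 < enn2real S" using Sfin Spos
    by (simp add: enn2real_positive_iff top.not_eq_extremum zero_less_iff_neq_zero)
  then have s0: "s > 0" unfolding s_def using m0 by simp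
  have Wfin: "W \<noteq> \<infinity>"
  proof
    assume "W = \<infinity>"
    then have "W / emeasure M R = \<infinity>" using Rfin by (simp add: ennreal_divide_eq_top_iff less_top)
    then have "Ap_quantity M p w R = \<infinity>" unfolding Ap_quantity_def
      using Sfin s0 Sp m0 unfolding S_def[symmetric] W_def[symmetric] Let_def s_def m_def
      by (simp add: ennreal_top_mult)
    then show False using QA Afin A_def by (simp add: top_unique)
  qed
  have a_def': "a = enn2real W / m" unfolding a_def avg_def W_def m_def by simp
  have a0: "a \<ge> 0" unfolding a_def' using m0 by simp
  have Wa: "W = ennreal (a * m)" unfolding a_def' using m0 Wfin by (simp add: ennreal_enn2real_if)
  have "Ap_quantity M p w R = ennreal (a * s powr (p - 1))"
  proof -
    have "ennreal (a * m) / ennreal m = ennreal (a * m / m)" using m0 a0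
      by (intro divide_ennreal) auto
    then have Wd: "W / emeasure M R = ennreal a" unfolding Wa emR using m0 by simp
    have "Ap_quantity M p w R = W / emeasure M R * ennreal (s powr (p - 1))"
      unfolding Ap_quantity_def Let_def S_def[symmetric] W_def[symmetric] s_def m_def
      using Sfin by simp
    also have "\<dots> = ennreal (a * s powr (p - 1))" unfolding Wd
      using a0 by (simp add: ennreal_mult)
    finally show ?thesis .
  qed
  then have Ka: "a * s powr (p - 1) \<le> K" unfolding K_def
  proof -
    assume "Ap_quantity M p w R = ennreal (a * s powr (p - 1))"
    then have "ennreal (a * s powr (p - 1)) \<le> A" using QA by simp
    then have "enn2real (ennreal (a * s powr (p - 1))) \<le> enn2real A"
      using Afin A_def by (intro enn2real_mono) auto
    then show "a * s powr (p - 1) \<le> enn2real A" using a0 by simp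
  qed
  have K0: "K \<ge> 0" unfolding K_def by simp
  define E where "E = {x\<in>R. \<not> w x > c}"
  define F where "F = {x\<in>R. w x > c}"
  have Em[measurable]: "E \<in> sets M" unfolding E_def by measurable
  have Fm[measurable]: "F \<in> sets M" unfolding F_def by measurable
  have emE: "emeasure M E = ennreal (measure M E)"
  proof (rule emeasure_eq_ennreal_measure)
    have "emeasure M E \<le> emeasure M R" using Rm by (intro emeasure_mono) (auto simp: E_def)
    then show "emeasure M E \<noteq> top" using Rfin by (auto simp: top_unique)
  qed
  have c0: "c \<ge> 0" unfolding c_def using a0 K0 by simp
  have ESint: "(\<integral>\<^sup>+x. d * indicator E x \<partial>M) \<le> S" if "\<And>x. x \<in> E \<Longrightarrow> d \<le> dual_weight p w x" for d
    unfolding S_def by (rule nn_integral_mono) (auto simp: indicator_def E_def that)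
  have Ehalf: "measure M E \<le> m / 2"
  proof (cases "c = 0")
    case True
    have "(\<integral>\<^sup>+x. \<infinity> * indicator E x \<partial>M) \<le> S"
      by (rule ESint) (auto simp: E_def dual_weight_def True intro: antisym w0)
    then have "\<infinity> * emeasure M E \<le> S" by (simp add: nn_integral_cmult_indicator)
    then have "emeasure M E = 0" using Sfin
      by (cases "emeasure M E = 0") (auto simp: ennreal_top_mult top_unique)
    then show ?thesis using m0 emE by simp
  next
    case False
    then have cp: "c > 0" using c0 by simp
    then have Kp: "K > 0" and ap: "a > 0" unfolding c_def using K0 a0
      by (auto simp: zero_less_divide_iff zero_less_mult_iff)
    define q where "q = 1 - conj_exp p"
    have q: "q * (p - 1) = -1" unfolding q_def conj_exp_def using assms(2) by (simp add: field_simps)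
    have qn: "q < 0"
    proof (rule ccontr)
      assume "\<not> q < 0"
      then have "q * (p - 1) \<ge> 0" using assms(2) by simp
      then show False using q by simp
    qed
    have "(\<integral>\<^sup>+x. ennreal (c powr q) * indicator E x \<partial>M) \<le> S"
    proof (rule ESint)
      fix x assume "x \<in> E"
      then have wx: "w x \<le> c" unfolding E_def by auto
      show "ennreal (c powr q) \<le> dual_weight p w x"
      proof (cases "w x = 0")
        case False
        then have "c powr q \<le> w x powr q" using wx w0[of x] qn
          by (intro powr_mono2') auto
        then show ?thesis using False unfolding dual_weight_def q_def by simp
      qed (simp add: dual_weight_def)
    qed
    then have "ennreal (c powr q) * emeasure M E \<le> S" by (simp add: nn_integral_cmult_indicator)
    then have "ennreal (c powr q * measure M E) \<le> S" unfolding emE by (simp add: ennreal_mult'')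
    then have "c powr q * measure M E \<le> enn2real S"
    proof -
      assume h: "ennreal (c powr q * measure M E) \<le> S"
      have "enn2real (ennreal (c powr q * measure M E)) \<le> enn2real S"
        using Sfin h by (intro enn2real_mono) (auto simp: top.not_eq_extremum)
      then show ?thesis by simp
    qed
    then have "c powr q * (measure M E / m) \<le> s" unfolding s_def using m0
      by (simp add: divide_right_mono)
    then have "(c powr q * (measure M E / m)) powr (p - 1) \<le> s powr (p - 1)"
      using assms(2) m0 by (intro powr_mono2) auto
    moreover have "(c powr q * (measure M E / m)) powr (p - 1) = (measure M E / m) powr (p - 1) / c"
      using cp m0 by (simp add: powr_mult powr_powr q powr_minus divide_inverse)
    ultimately have "a * ((measure M E / m) powr (p - 1) / c) \<le> K" using Ka ap
    proof -
      assume h1: "(c powr q * (measure M E / m)) powr (p - 1) \<le> s powr (p - 1)"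
        and h2: "(c powr q * (measure M E / m)) powr (p - 1) = (measure M E / m) powr (p - 1) / c"
        and h3: "a * s powr (p - 1) \<le> K" and h4: "0 < a"
      have "(measure M E / m) powr (p - 1) / c \<le> s powr (p - 1)" using h1 h2 by simp
      then have "a * ((measure M E / m) powr (p - 1) / c) \<le> a * s powr (p - 1)"
        using h4 by (intro mult_left_mono) auto
      then show ?thesis using h3 by simp
    qed
    moreover have "a / c = 2 powr (p - 1) * K" unfolding c_def using ap Kp by simp
    moreover have "a * ((measure M E / m) powr (p - 1) / c) = (a / c) * (measure M E / m) powr (p - 1)"
      by simp
    ultimately have "2 powr (p - 1) * K * (measure M E / m) powr (p - 1) \<le> K"
      by metis
    then have "2 powr (p - 1) * (measure M E / m) powr (p - 1) \<le> 1" using Kp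
      by simp
    moreover have "(2 * (measure M E / m)) powr (p - 1) = 2 powr (p - 1) * (measure M E / m) powr (p - 1)"
      by (rule powr_mult)
    ultimately have "(2 * (measure M E / m)) powr (p - 1) \<le> 1" by simp
    have "2 * (measure M E / m) \<le> 1"
    proof (rule ccontr)
      assume "\<not> 2 * (measure M E / m) \<le> 1"
      then have "1 powr (p - 1) < (2 * (measure M E / m)) powr (p - 1)"
        using assms(2) by (intro powr_less_mono2) auto
      then show False using \<open>(2 * (measure M E / m)) powr (p - 1) \<le> 1\<close> by simp
    qed
    then show ?thesis using m0 by (simp add: field_simps)
  qed
  have "measure M R = measure M F + measure M E"
  proof -
    have "R = F \<union> E" "F \<inter> E = {}" unfolding E_def F_def by auto
    then show ?thesis
      using measure_Union[of M F E] Fm Em Rfin emeasure_mono[of F R M] emeasure_mono[of E R M] Rm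
      by (auto simp: less_top)
  qed
  then have mF: "m \<le> 2 * measure M F" using Ehalf m_def by simp
  have emF: "emeasure M F = ennreal (measure M F)"
  proof (rule emeasure_eq_ennreal_measure)
    have "emeasure M F \<le> emeasure M R" using Rm by (intro emeasure_mono) (auto simp: F_def)
    then show "emeasure M F \<noteq> top" using Rfin by (auto simp: top_unique)
  qed
  have lp: "lam > 0" using assms(5) a0 a_def by simp
  have "(\<integral>\<^sup>+x\<in>{x\<in>R. w x > lam}. ennreal (w x) \<partial>M) \<le> W"
    unfolding W_def by (rule nn_set_integral_set_mono) auto
  also have "\<dots> \<le> ennreal (2 * lam * measure M F)"
    unfolding Wa
  proof (rule ennreal_leI)
    have "a * m \<le> lam * m" using assms(5) a_def m0 by simp
    also have "\<dots> \<le> lam * (2 * measure M F)" using mF lp by simp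
    finally show "a * m \<le> 2 * lam * measure M F" by simp
  qed
  also have "\<dots> = ennreal (2 * lam) * emeasure M F" unfolding emF using lp
    by (simp add: ennreal_mult'')
  finally show ?thesis unfolding F_def c_def a_def K_def A_def .
qed
end
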